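(* Let $P$ be a positroid on $[n]$ and $X\subseteq[n]$. If both $P|_X$ and $P/X$ are connected, then $X$ is a cyclic interval of $[n]$.
   Context: A positroid of rank $k$ on $[n]$ is the matroid of a real $k\times n$ matrix of rank $k$ all of whose maximal minors are nonnegative. A cyclic interval is a subset of $[n]$ of the form $\{a,a+1,\dots,b\}$ with indices read modulo $n$ (i.e. the image of an interval under a cyclic permutation). A matroid is connected if it is not a direct sum of two matroids on nonempty ground sets; $P|_X$ is restriction and $P/X$ contraction. *)

theory Defs
  imports "Jordan_Normal_Form.DL_Rank_Submatrix"
begin

text \<open>Conventions. The ground set [n] is represented as {0..<n} (columns of a
JNF matrix are indexed from 0). A matroid on a finite ground set E is given
by its family of bases.\<close>

definition matroid_bases :: "'a set \<Rightarrow> 'a set set \<Rightarrow> bool" where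
  "matroid_bases E \<B> \<longleftrightarrow> finite E \<and> \<B> \<noteq> {} \<and> (\<forall>B\<in>\<B>. B \<subseteq> E) \<and>
     (\<forall>B1\<in>\<B>. \<forall>B2\<in>\<B>. \<forall>x\<in>B1 - B2. \<exists>y\<in>B2 - B1. insert y (B1 - {x}) \<in> \<B>)"

definition restr_bases :: "'a set set \<Rightarrow> 'a set \<Rightarrow> 'a set set" where
  "restr_bases \<B> X = {I. (\<exists>B\<in>\<B>. I = B \<inter> X) \<and> \<not> (\<exists>B\<in>\<B>. I \<subset> B \<inter> X)}"

definition contr_bases :: "'a set set \<Rightarrow> 'a set \<Rightarrow> 'a set set" where
  "contr_bases \<B> X = {B - X | B. B \<in> \<B> \<and> B \<inter> X \<in> restr_bases \<B> X}"

definition direct_sum_bases :: "'a set set \<Rightarrow> 'a set set \<Rightarrow> 'a set set" where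
  "direct_sum_bases \<B>1 \<B>2 = {B1 \<union> B2 | B1 B2. B1 \<in> \<B>1 \<and> B2 \<in> \<B>2}"

definition connected_matroid :: "'a set \<Rightarrow> 'a set set \<Rightarrow> bool" where
  "connected_matroid E \<B> \<longleftrightarrow>
     \<not> (\<exists>E1 E2 \<B>1 \<B>2. E1 \<noteq> {} \<and> E2 \<noteq> {} \<and> E1 \<inter> E2 = {} \<and> E1 \<union> E2 = E \<and>
          matroid_bases E1 \<B>1 \<and> matroid_bases E2 \<B>2 \<and> \<B> = direct_sum_bases \<B>1 \<B>2)"

text \<open>Maximal minor of a k x n matrix A with column set I (columns in increasing order).\<close>
definition max_minor :: "real mat \<Rightarrow> nat set \<Rightarrow> real" where
  "max_minor A I = det (submatrix A {..<dim_row A} I)"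

definition positroid :: "nat \<Rightarrow> nat set set \<Rightarrow> bool" where
  "positroid n \<B> \<longleftrightarrow> (\<exists>k A. A \<in> carrier_mat k n \<and> vec_space.rank k A = k \<and>
     (\<forall>I. I \<subseteq> {..<n} \<and> card I = k \<longrightarrow> max_minor A I \<ge> 0) \<and>
     \<B> = {I. I \<subseteq> {..<n} \<and> card I = k \<and> max_minor A I \<noteq> 0})"

text \<open>Cyclic intervals of {0..<n}; the empty set is counted as a (degenerate) cyclic interval.\<close>
definition cyclic_interval :: "nat \<Rightarrow> nat set \<Rightarrow> bool" where
  "cyclic_interval n X \<longleftrightarrow> X = {} \<or>
     (\<exists>a<n. \<exists>m. 1 \<le> m \<and> m \<le> n \<and> X = {(a + i) mod n | i. i < m})"

end

theory Submission
  imports Defs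
begin

definition Dc :: "nat \<Rightarrow> real vec list \<Rightarrow> real" where
  "Dc k cs = det (mat_of_cols k cs)"

lemma swap_adj:
  assumes "set (xs @ [a,b] @ ys) \<subseteq> carrier_vec k" "length (xs @ [a,b] @ ys) = k"
  shows "Dc k (xs @ [b,a] @ ys) = - Dc k (xs @ [a,b] @ ys)"
proof -
  let ?i = "length xs"
  let ?M = "mat_of_cols k (xs @ [a,b] @ ys)"
  have M: "?M \<in> carrier_mat k k" using assms by auto
  have "swapcols ?i (Suc ?i) ?M = mat_of_cols k (xs @ [b,a] @ ys)"
    by (rule eq_matI) (auto simp: mat_of_cols_def nth_append)
  moreover have "det (swapcols ?i (Suc ?i) ?M) = - det ?M"
    by (rule det_swapcols) (use assms M in auto)
  ultimately show ?thesis unfolding Dc_def by simp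
qed

lemma move_last:
  assumes "set (xs @ [u] @ ys) \<subseteq> carrier_vec k" "length (xs @ [u] @ ys) = k"
  shows "Dc k (xs @ [u] @ ys) = (-1)^(length ys) * Dc k (xs @ ys @ [u])"
  using assms
proof (induction ys arbitrary: xs)
  case Nil then show ?case by simp
next
  case (Cons y ys)
  have "Dc k (xs @ [u] @ y # ys) = - Dc k (xs @ [y, u] @ ys)"
    using swap_adj[of xs y u ys k] Cons.prems by auto
  also have "xs @ [y, u] @ ys = (xs @ [y]) @ [u] @ ys" by simp
  also have "Dc k \<dots> = (-1)^(length ys) * Dc k ((xs @ [y]) @ ys @ [u])"
    by (rule Cons.IH) (use Cons.prems in auto)
  finally show ?case by simp
qed


lemma insort_split:
  fixes S :: "nat list"
  assumes "sorted S" "u \<notin> set S"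
  shows "\<exists>xs ys. S = xs @ ys \<and> insort u S = xs @ u # ys \<and> length ys = length (filter (\<lambda>s. u < s) S)"
  using assms
proof (induction S)
  case Nil then show ?case by simp
next
  case (Cons s S)
  show ?case
  proof (cases "u \<le> s")
    case True
    have st: "\<forall>t\<in>set S. s \<le> t" using Cons.prems by simp
    have us: "u < s" using True Cons.prems(2) by simp
    have "\<forall>t\<in>set (s # S). u < t" using us st by fastforce
    hence "filter (\<lambda>t. u < t) (s # S) = s # S" by (rule filter_True)
    moreover have "insort u (s # S) = u # s # S" using True by simp
    ultimately show ?thesis by (intro exI[of _ "[]"] exI[of _ "s # S"]) simp
  next
    case False
    have "sorted S" "u \<notin> set S" using Cons.prems by auto
    then obtain xs ys where "S = xs @ ys" "insort u S = xs @ u # ys" "length ys = length (filter (\<lambda>s. u < s) S)"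
      using Cons.IH by blast
    then show ?thesis using False by (intro exI[of _ "s # xs"] exI[of _ ys]) simp
  qed
qed


definition Dl :: "real mat \<Rightarrow> nat \<Rightarrow> nat list \<Rightarrow> real" where
  "Dl A k L = Dc k (map (col A) L)"

lemma ins_sign:
  assumes A: "A \<in> carrier_mat k n" and I: "finite I" and u: "u \<notin> I"
    and len: "card I + 1 = k"
  shows "Dl A k (sorted_list_of_set (insert u I)) = (-1)^(card {s\<in>I. u<s}) * Dl A k (sorted_list_of_set I @ [u])"
proof -
  let ?S = "sorted_list_of_set I"
  have sl: "sorted_list_of_set (insert u I) = insort u ?S" using I u by simp
  obtain xs ys where xy: "?S = xs @ ys" "insort u ?S = xs @ u # ys" "length ys = length (filter (\<lambda>s. u < s) ?S)"
    using insort_split[of ?S u] I u by auto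
  have "length (filter (\<lambda>s. u < s) ?S) = card {s\<in>I. u<s}"
    using distinct_length_filter[of ?S "\<lambda>s. u < s"] I by (simp add: Int_def conj_commute)
  hence ly: "length ys = card {s\<in>I. u<s}" using xy by simp
  have carr: "set (map (col A) (xs @ [u] @ ys)) \<subseteq> carrier_vec k" using A by auto
  have lenk: "length (map (col A) (xs @ [u] @ ys)) = k"
  proof -
    have "length ?S = card I" by simp
    thus ?thesis using xy len by simp
  qed
  have "Dl A k (sorted_list_of_set (insert u I)) = Dc k (map (col A) xs @ [col A u] @ map (col A) ys)"
    unfolding Dl_def sl xy(2) by simp
  also have "\<dots> = (-1)^(length ys) * Dc k (map (col A) xs @ map (col A) ys @ [col A u])"
    using move_last[of "map (col A) xs" "col A u" "map (col A) ys" k] carr lenk by simp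
  also have "\<dots> = (-1)^(card {s\<in>I. u<s}) * Dl A k (?S @ [u])"
    unfolding Dl_def ly xy by simp
  finally show ?thesis .
qed

lemma pick_sorted:
  assumes "finite I" "j < card I"
  shows "pick I j = sorted_list_of_set I ! j"
proof -
  let ?s = "sorted_list_of_set I"
  let ?x = "?s ! j"
  have "j < length ?s" using assms by simp
  hence "?x \<in> set ?s" by (rule nth_mem)
  hence xI: "?x \<in> I" using assms(1) by simp
  have "{a\<in>I. a < ?x} = set (take j ?s)"
  proof -
    have st: "sorted_wrt (<) ?s" by simp
    have "set (take j ?s) \<subseteq> {a\<in>I. a < ?x}"
    proof
      fix a assume "a \<in> set (take j ?s)"
      then obtain i where "i < j" "a = ?s ! i" using assms by (auto simp: in_set_conv_nth)
      hence il: "i < length ?s" "j < length ?s" using assms by auto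
      have "a \<in> set ?s" using \<open>a = ?s ! i\<close> il by simp
      moreover have "?s ! i < ?s ! j" by (rule sorted_wrt_nth_less[OF st \<open>i < j\<close> il(2)])
      ultimately show "a \<in> {a\<in>I. a < ?x}" using \<open>a = ?s ! i\<close> assms(1) by simp
    qed
    moreover have "{a\<in>I. a < ?x} \<subseteq> set (take j ?s)"
    proof
      fix a assume a: "a \<in> {a\<in>I. a < ?x}"
      hence "a \<in> set ?s" using assms(1) by simp
      then obtain i where i: "i < card I" "a = ?s ! i" by (auto simp: in_set_conv_nth)
      have "i < j"
      proof (rule ccontr)
        assume "\<not> i < j"
        hence "j \<le> i" by simp
        hence "?x \<le> ?s ! i" using i st by (simp add: sorted_nth_mono)
        thus False using a i by auto
      qed
      thus "a \<in> set (take j ?s)" using i assms by (auto simp: in_set_conv_nth intro!: exI[of _ i])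
    qed
    ultimately show ?thesis by blast
  qed
  hence "card {a\<in>I. a < ?x} = j" using assms by (simp add: distinct_card)
  thus ?thesis using pick_card_in_set[OF xI] by simp
qed

lemma max_minor_Dl:
  assumes A: "A \<in> carrier_mat k n" and I: "I \<subseteq> {..<n}"
  shows "max_minor A I = Dl A k (sorted_list_of_set I)"
proof -
  have fI: "finite I" using I finite_subset by blast
  have "{i. i < dim_row A \<and> i \<in> {..<dim_row A}} = {..<k}" using A by auto
  hence c1: "card {i. i < dim_row A \<and> i \<in> {..<dim_row A}} = k" by simp
  have "{j. j < dim_col A \<and> j \<in> I} = I" using A I by auto
  hence c2: "card {j. j < dim_col A \<and> j \<in> I} = card I" by simp
  have pk: "pick {..<k} i = i" if "i < k" for i
  proof -
    have "{a\<in>{..<k}. a < i} = {..<i}" using that by auto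
    hence "card {a\<in>{..<k}. a < i} = i" by simp
    thus ?thesis using pick_card_in_set[of i "{..<k}"] that by simp
  qed
  have "submatrix A {..<dim_row A} I = mat_of_cols k (map (col A) (sorted_list_of_set I))"
  proof (rule eq_matI)
    fix i j assume i: "i < dim_row (mat_of_cols k (map (col A) (sorted_list_of_set I)))"
      and j: "j < dim_col (mat_of_cols k (map (col A) (sorted_list_of_set I)))"
    hence ik: "i < k" and jI: "j < card I" by auto
    have "j < length (sorted_list_of_set I)" using jI by simp
    hence "sorted_list_of_set I ! j \<in> set (sorted_list_of_set I)" by (rule nth_mem)
    hence "sorted_list_of_set I ! j \<in> I" using fI by simp
    hence jn: "sorted_list_of_set I ! j < n" using I by auto
    have "submatrix A {..<dim_row A} I $$ (i, j) = A $$ (pick {..<dim_row A} i, pick I j)"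
      by (rule submatrix_index) (simp_all only: c1 c2 ik jI)
    also have "\<dots> = A $$ (i, sorted_list_of_set I ! j)" using pk[OF ik] pick_sorted[OF fI jI] A by simp
    finally have 1: "submatrix A {..<dim_row A} I $$ (i, j) = A $$ (i, sorted_list_of_set I ! j)" .
    have "mat_of_cols k (map (col A) (sorted_list_of_set I)) $$ (i, j) = (map (col A) (sorted_list_of_set I) ! j) $ i"
      unfolding mat_of_cols_def using ik jI by simp
    also have "\<dots> = col A (sorted_list_of_set I ! j) $ i" using jI by simp
    also have "\<dots> = A $$ (i, sorted_list_of_set I ! j)" using ik jn A by simp
    finally show "submatrix A {..<dim_row A} I $$ (i, j) = mat_of_cols k (map (col A) (sorted_list_of_set I)) $$ (i, j)"
      using 1 by simp
  next
    show "dim_row (submatrix A {..<dim_row A} I) = dim_row (mat_of_cols k (map (col A) (sorted_list_of_set I)))"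
      unfolding dim_submatrix c1 by simp
  next
    show "dim_col (submatrix A {..<dim_row A} I) = dim_col (mat_of_cols k (map (col A) (sorted_list_of_set I)))"
      unfolding dim_submatrix c2 by simp
  qed
  thus ?thesis unfolding max_minor_def Dl_def Dc_def by simp
qed


lemma delete_nth:
  assumes "j < length U" "j' < length U - 1"
  shows "(take j U @ drop (Suc j) U) ! j' = U ! (if j' < j then j' else Suc j')"
  using assms by (auto simp: nth_append min_def)

lemma GP:
  fixes W U :: "real vec list"
  assumes k: "k \<ge> 1" and lW: "length W = k - 1" and lU: "length U = k + 1"
    and cW: "set W \<subseteq> carrier_vec k" and cU: "set U \<subseteq> carrier_vec k"
  shows "(\<Sum>j<k+1. (-1)^j * Dc k (W @ [U!j]) * Dc k (take j U @ drop (Suc j) U)) = 0"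
proof -
  define N0 where "N0 = mat_of_cols k (W @ [0\<^sub>v k])"
  define c where "c i = cofactor N0 i (k-1)" for i
  have phi: "Dc k (W @ [v]) = (\<Sum>i<k. v $ i * c i)" if v: "v \<in> carrier_vec k" for v
  proof -
    let ?N = "mat_of_cols k (W @ [v])"
    have "length (W @ [v]) = k" using lW k by simp
    hence N: "?N \<in> carrier_mat k k" using mat_of_cols_carrier(1)[of k "W @ [v]"] by simp
    have "det ?N = (\<Sum>i<k. ?N $$ (i, k-1) * cofactor ?N i (k-1))"
      by (rule laplace_expansion_column[OF N]) (use k in simp)
    also have "\<dots> = (\<Sum>i<k. v $ i * c i)"
    proof (rule sum.cong[OF refl])
      fix i assume i: "i \<in> {..<k}"
      have e1: "?N $$ (i, k-1) = v $ i" using i lW k by (simp add: mat_of_cols_def nth_append)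
      have "mat_delete ?N i (k-1) = mat_delete N0 i (k-1)"
        unfolding N0_def by (rule eq_matI) (use lW k in \<open>auto simp: mat_delete_def mat_of_cols_def nth_append\<close>)
      hence "cofactor ?N i (k-1) = c i" unfolding c_def cofactor_def by simp
      thus "?N $$ (i, k-1) * cofactor ?N i (k-1) = v $ i * c i" using e1 by simp
    qed
    finally show ?thesis unfolding Dc_def .
  qed
  define M where "M = mat (k+1) (k+1) (\<lambda>(i,j). if i = 0 then Dc k (W @ [U!j]) else (U!j) $ (i-1))"
  have M: "M \<in> carrier_mat (k+1) (k+1)" unfolding M_def by simp
  have MT: "transpose_mat M \<in> carrier_mat (k+1) (k+1)" using M by simp
  define v where "v = vec (k+1) (\<lambda>i. if i = 0 then 1 else - c (i-1))"
  have Uc: "U ! j \<in> carrier_vec k" if "j < k+1" for j using cU that lU by (metis nth_mem subsetD)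
  have "transpose_mat M *\<^sub>v v = 0\<^sub>v (k+1)"
  proof (rule eq_vecI)
    fix j assume "j < dim_vec (0\<^sub>v (k+1) :: real vec)"
    hence j: "j < k+1" by simp
    have "(transpose_mat M *\<^sub>v v) $ j = (\<Sum>i<k+1. M $$ (i,j) * v $ i)"
      using j M by (simp add: scalar_prod_def v_def lessThan_atLeast0 ac_simps)
    also have "\<dots> = M $$ (0,j) * v $ 0 + (\<Sum>i<k. M $$ (Suc i, j) * v $ (Suc i))"
      using sum.lessThan_Suc_shift[of "\<lambda>i. M $$ (i,j) * v $ i" k] by simp
    also have "\<dots> = Dc k (W @ [U!j]) - (\<Sum>i<k. (U!j) $ i * c i)"
      using j by (simp add: M_def v_def sum_negf)
    also have "\<dots> = 0" using phi[OF Uc[OF j]] by simp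
    finally show "(transpose_mat M *\<^sub>v v) $ j = 0\<^sub>v (k+1) $ j" using j by simp
  qed (use M in simp)
  moreover have "v \<in> carrier_vec (k+1)" "v \<noteq> 0\<^sub>v (k+1)"
  proof -
    show "v \<in> carrier_vec (k+1)" unfolding v_def by simp
    have "v $ 0 = 1" unfolding v_def by simp
    thus "v \<noteq> 0\<^sub>v (k+1)" by (metis index_zero_vec(1) zero_less_Suc add.commute plus_1_eq_Suc zero_neq_one)
  qed
  ultimately have "det (transpose_mat M) = 0" using det_0_iff_vec_prod_zero[OF MT] by blast
  hence detM: "det M = 0" using det_transpose[OF M] by simp
  have "det M = (\<Sum>j<k+1. M $$ (0,j) * cofactor M 0 j)"
    by (rule laplace_expansion_row[OF M]) simp
  also have "\<dots> = (\<Sum>j<k+1. (-1)^j * Dc k (W @ [U!j]) * Dc k (take j U @ drop (Suc j) U))"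
  proof (rule sum.cong[OF refl])
    fix j assume "j \<in> {..<k+1}"
    hence j: "j < k+1" by simp
    have "mat_delete M 0 j = mat_of_cols k (take j U @ drop (Suc j) U)"
    proof (rule eq_matI)
      fix i' j' assume i': "i' < dim_row (mat_of_cols k (take j U @ drop (Suc j) U))"
        and j': "j' < dim_col (mat_of_cols k (take j U @ drop (Suc j) U))"
      hence i'k: "i' < k" and j'k: "j' < k" using lU j by auto
      have "mat_delete M 0 j $$ (i', j') = M $$ (Suc i', if j' < j then j' else Suc j')"
        unfolding mat_delete_def using M i'k j'k by auto
      also have "\<dots> = (U ! (if j' < j then j' else Suc j')) $ i'"
        unfolding M_def using i'k j'k j by auto
      also have "\<dots> = (take j U @ drop (Suc j) U) ! j' $ i'"
        using delete_nth[of j U j'] j j'k lU by simp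
      also have "\<dots> = mat_of_cols k (take j U @ drop (Suc j) U) $$ (i', j')"
        unfolding mat_of_cols_def using i'k j'k j lU by simp
      finally show "mat_delete M 0 j $$ (i', j') = mat_of_cols k (take j U @ drop (Suc j) U) $$ (i', j')" .
    qed (use M lU j in auto)
    thus "M $$ (0,j) * cofactor M 0 j = (-1)^j * Dc k (W @ [U!j]) * Dc k (take j U @ drop (Suc j) U)"
      using j by (simp add: M_def cofactor_def Dc_def)
  qed
  finally show ?thesis using detM by simp
qed


lemma sl_of_sorted: "sorted_wrt (<) (xs::nat list) \<Longrightarrow> sorted_list_of_set (set xs) = xs"
  using strict_sorted_equal[of "sorted_list_of_set (set xs)" xs] by simp

lemma sl_delete:
  fixes I :: "nat set"
  assumes "finite I" "j < card I"
  shows "take j (sorted_list_of_set I) @ drop (Suc j) (sorted_list_of_set I)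
         = sorted_list_of_set (I - {sorted_list_of_set I ! j})"
proof -
  let ?L = "sorted_list_of_set I"
  have jl: "j < length ?L" using assms by simp
  have L: "?L = take j ?L @ ?L ! j # drop (Suc j) ?L" using id_take_nth_drop[OF jl] .
  have st: "sorted_wrt (<) ?L" by simp
  have dist: "distinct ?L" by simp
  have "sorted_wrt (<) (take j ?L @ drop (Suc j) ?L)"
  proof -
    have "sorted_wrt (<) (take j ?L @ ?L ! j # drop (Suc j) ?L)" using st by (simp only: L[symmetric])
    thus ?thesis by (auto simp: sorted_wrt_append)
  qed
  moreover have "set (take j ?L @ drop (Suc j) ?L) = I - {?L ! j}"
  proof -
    have "distinct (take j ?L @ ?L ! j # drop (Suc j) ?L)" using dist by (simp only: L[symmetric])
    hence "?L ! j \<notin> set (take j ?L @ drop (Suc j) ?L)" by auto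
    moreover have "set ?L = set (take j ?L @ ?L ! j # drop (Suc j) ?L)"
      by (rule arg_cong[where f=set, OF L])
    hence "set ?L = set (take j ?L @ drop (Suc j) ?L) \<union> {?L ! j}" by auto
    ultimately show ?thesis using assms(1) by auto
  qed
  ultimately show ?thesis using sl_of_sorted[of "take j ?L @ drop (Suc j) ?L"] by simp
qed

definition mS :: "nat set \<Rightarrow> nat \<Rightarrow> nat" where "mS S z = card {s\<in>S. z < s}"

lemma neg1_sq: "((-1::real)^a) * ((-1)^a) = 1"
  by (simp add: power_add[symmetric])

lemma two_sign:
  assumes A: "A \<in> carrier_mat k n" and S: "finite S" and xy: "x < y" "x \<notin> S" "y \<notin> S"
    and len: "card S + 2 = k"
  shows "Dl A k (sorted_list_of_set S @ [x, y]) = (-1)^(mS S x + mS S y) * Dl A k (sorted_list_of_set (insert x (insert y S)))"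
proof -
  let ?S = "sorted_list_of_set S"
  obtain xs ys where e: "?S = xs @ ys" "insort y ?S = xs @ y # ys" "length ys = length (filter (\<lambda>s. y < s) ?S)"
    using insort_split[of ?S y] S xy by auto
  have "length (filter (\<lambda>s. y < s) ?S) = mS S y"
    using distinct_length_filter[of ?S "\<lambda>s. y < s"] S unfolding mS_def by (simp add: Int_def conj_commute)
  hence ly: "length ys = mS S y" using e by simp
  have slSy: "sorted_list_of_set (insert y S) = xs @ y # ys" using e S xy by simp
  have lS: "length ?S = card S" by simp
  have cc: "col A z \<in> carrier_vec k" for z using A unfolding col_def by auto
  have pre1: "set (map (col A) xs @ [col A y] @ map (col A) (ys @ [x])) \<subseteq> carrier_vec k" using cc by auto
  have pre2: "length (map (col A) xs @ [col A y] @ map (col A) (ys @ [x])) = k"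
  proof -
    have "length xs + length ys = card S" using e(1) lS by (metis length_append)
    thus ?thesis using len by simp
  qed
  have "Dc k (map (col A) xs @ [col A y] @ map (col A) (ys @ [x])) =
        (-1)^(length (ys @ [x])) * Dc k (map (col A) xs @ map (col A) (ys @ [x]) @ [col A y])"
    using move_last[OF pre1 pre2] by simp
  hence 1: "Dl A k (?S @ [x, y]) = (-1)^(mS S y + 1) * Dl A k (sorted_list_of_set (insert y S) @ [x])"
  proof -
    assume h: "Dc k (map (col A) xs @ [col A y] @ map (col A) (ys @ [x])) =
        (-1)^(length (ys @ [x])) * Dc k (map (col A) xs @ map (col A) (ys @ [x]) @ [col A y])"
    have a: "Dl A k (?S @ [x, y]) = Dc k (map (col A) xs @ map (col A) (ys @ [x]) @ [col A y])"
      unfolding Dl_def e by simp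
    have b: "Dl A k (sorted_list_of_set (insert y S) @ [x]) = Dc k (map (col A) xs @ [col A y] @ map (col A) (ys @ [x]))"
      unfolding Dl_def slSy by simp
    have "(-1)^(mS S y + 1) * Dl A k (sorted_list_of_set (insert y S) @ [x])
       = (-1)^(mS S y + 1) * ((-1)^(mS S y + 1) * Dl A k (?S @ [x, y]))"
      unfolding b h a using ly by simp
    also have "\<dots> = Dl A k (?S @ [x, y])" using neg1_sq[of "mS S y + 1"] by (simp add: mult.assoc[symmetric])
    finally show ?thesis by simp
  qed
  have m: "mS (insert y S) x = mS S x + 1"
  proof -
    have "{s\<in>insert y S. x < s} = insert y {s\<in>S. x < s}" using xy by auto
    thus ?thesis unfolding mS_def using S xy by simp
  qed
  have 2: "Dl A k (sorted_list_of_set (insert x (insert y S))) = (-1)^(mS S x + 1) * Dl A k (sorted_list_of_set (insert y S) @ [x])"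
    using ins_sign[OF A, of "insert y S" x] S xy len m unfolding mS_def by simp
  have "Dl A k (sorted_list_of_set (insert y S) @ [x]) = (-1)^(mS S x + 1) * Dl A k (sorted_list_of_set (insert x (insert y S)))"
    unfolding 2 using neg1_sq[of "mS S x + 1"] by (simp add: mult.assoc[symmetric])
  hence "Dl A k (?S @ [x, y]) = ((-1)^(mS S y + 1) * (-1)^(mS S x + 1)) * Dl A k (sorted_list_of_set (insert x (insert y S)))"
    using 1 by simp
  also have "(-1::real)^(mS S y + 1) * (-1)^(mS S x + 1) = (-1)^(mS S x + mS S y)"
    by (simp add: power_add)
  finally show ?thesis .
qed


definition Dm :: "real mat \<Rightarrow> nat \<Rightarrow> nat set \<Rightarrow> real" where
  "Dm A k I = Dl A k (sorted_list_of_set I)"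

lemma col_carr: "A \<in> carrier_mat k n \<Longrightarrow> col A z \<in> carrier_vec k"
  unfolding col_def by auto

lemma three_term:
  assumes A: "A \<in> carrier_mat k n" and S: "finite S"
    and o: "a < b" "b < c" "c < d" and nS: "a \<notin> S" "b \<notin> S" "c \<notin> S" "d \<notin> S"
    and len: "card S + 2 = k"
  shows "Dm A k (insert a (insert c S)) * Dm A k (insert b (insert d S)) =
         Dm A k (insert a (insert b S)) * Dm A k (insert c (insert d S)) +
         Dm A k (insert a (insert d S)) * Dm A k (insert b (insert c S))"
proof -
  let ?L = "sorted_list_of_set S"
  define p where "p = card S"
  have lL: "length ?L = p" unfolding p_def by simp
  define W where "W = map (col A) (?L @ [a])"
  define U where "U = map (col A) (?L @ [b, c, d])"
  define t where "t j = (-1)^j * Dc k (W @ [U!j]) * Dc k (take j U @ drop (Suc j) U)" for j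
  have k1: "k \<ge> 1" using len by simp
  have "(\<Sum>j<k+1. t j) = 0" unfolding t_def
    by (rule GP) (use k1 len lL col_carr[OF A] in \<open>auto simp: W_def U_def p_def\<close>)
  moreover have "(\<Sum>j<k+1. t j) = (\<Sum>j<p. t j) + t p + t (Suc p) + t (Suc (Suc p))"
  proof -
    have "k + 1 = Suc (Suc (Suc p))" using len p_def by simp
    thus ?thesis by simp
  qed
  moreover have "(\<Sum>j<p. t j) = 0"
  proof (rule sum.neutral, rule ballI)
    fix j assume "j \<in> {..<p}"
    hence j: "j < p" by simp
    let ?M = "mat_of_cols k (W @ [U!j])"
    have lWu: "length (W @ [U!j]) = k" using lL len p_def by (simp add: W_def)
    have M: "?M \<in> carrier_mat k k" using lWu mat_of_cols_carrier(1)[of k "W @ [U!j]"] by simp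
    have sU: "set U \<subseteq> carrier_vec k" using col_carr[OF A] by (auto simp: U_def)
    have "j < length U" using j lL by (simp add: U_def)
    hence "U!j \<in> set U" by (rule nth_mem)
    hence cWU: "set (W @ [U!j]) \<subseteq> carrier_vec k" using sU col_carr[OF A] by (auto simp: W_def)
    have nthc: "(W @ [U!j]) ! i \<in> carrier_vec k" if "i < length (W @ [U!j])" for i
      using cWU nth_mem[OF that] by blast
    have "col ?M j = col ?M (Suc p)"
    proof -
      have "col ?M j = (W @ [U!j]) ! j" using j lWu len p_def nthc by (intro col_mat_of_cols) auto
      also have "\<dots> = col A (?L ! j)" using j lL by (simp add: W_def nth_append)
      also have "\<dots> = (W @ [U!j]) ! (Suc p)" using j lL by (simp add: W_def U_def nth_append)
      also have "\<dots> = col ?M (Suc p)" using lWu len p_def nthc by (intro col_mat_of_cols[symmetric]) auto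
      finally show ?thesis .
    qed
    hence "det ?M = 0" using det_identical_cols[OF M, of j "Suc p"] j len p_def by auto
    thus "t j = 0" unfolding t_def Dc_def by simp
  qed
  moreover have "t p = (-1)^p * Dl A k (?L @ [a, b]) * Dl A k (?L @ [c, d])"
    unfolding t_def Dl_def W_def U_def using lL by (simp add: nth_append)
  moreover have "t (Suc p) = - ((-1)^p * Dl A k (?L @ [a, c]) * Dl A k (?L @ [b, d]))"
    unfolding t_def Dl_def W_def U_def using lL by (simp add: nth_append)
  moreover have "t (Suc (Suc p)) = (-1)^p * Dl A k (?L @ [a, d]) * Dl A k (?L @ [b, c])"
    unfolding t_def Dl_def W_def U_def using lL by (simp add: nth_append)
  ultimately have E: "(-1)^p * (Dl A k (?L @ [a, b]) * Dl A k (?L @ [c, d]) - Dl A k (?L @ [a, c]) * Dl A k (?L @ [b, d])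
        + Dl A k (?L @ [a, d]) * Dl A k (?L @ [b, c])) = (0::real)"
    by (simp add: algebra_simps)
  define s where "s z = ((-1::real)^(mS S z))" for z
  have ss: "s z * s z = 1" for z unfolding s_def by (rule neg1_sq)
  have ts: "Dl A k (?L @ [x, y]) = s x * s y * Dm A k (insert x (insert y S))"
    if "x < y" "x \<notin> S" "y \<notin> S" for x y
    using two_sign[OF A S that len] unfolding s_def Dm_def by (simp add: power_add)
  have E2: "Dl A k (?L @ [a, b]) * Dl A k (?L @ [c, d]) - Dl A k (?L @ [a, c]) * Dl A k (?L @ [b, d])
        + Dl A k (?L @ [a, d]) * Dl A k (?L @ [b, c]) = 0"
    using E by simp
  define \<sigma> where "\<sigma> = s a * s b * s c * s d"
  have "\<sigma> * (Dm A k (insert a (insert b S)) * Dm A k (insert c (insert d S)) -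
         Dm A k (insert a (insert c S)) * Dm A k (insert b (insert d S)) +
         Dm A k (insert a (insert d S)) * Dm A k (insert b (insert c S))) = 0"
    using E2 unfolding ts[OF o(1) nS(1,2)] ts[OF o(3) nS(3,4)] ts[OF order.strict_trans[OF o(1,2)] nS(1,3)]
      ts[OF o(2) nS(2,3)] ts[OF order.strict_trans[OF o(1) order.strict_trans[OF o(2,3)]] nS(1,4)]
      ts[OF order.strict_trans[OF o(2,3)] nS(2,4)] unfolding \<sigma>_def
    by (simp add: algebra_simps)
  moreover have "\<sigma> * \<sigma> = 1" unfolding \<sigma>_def using ss[of a] ss[of b] ss[of c] ss[of d]
    by (simp add: algebra_simps)
  ultimately have "\<sigma> \<noteq> 0" and h: "\<sigma> * (Dm A k (insert a (insert b S)) * Dm A k (insert c (insert d S)) -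
         Dm A k (insert a (insert c S)) * Dm A k (insert b (insert d S)) +
         Dm A k (insert a (insert d S)) * Dm A k (insert b (insert c S))) = 0" by auto
  hence "Dm A k (insert a (insert b S)) * Dm A k (insert c (insert d S)) -
         Dm A k (insert a (insert c S)) * Dm A k (insert b (insert d S)) +
         Dm A k (insert a (insert d S)) * Dm A k (insert b (insert c S)) = 0" by simp
  thus ?thesis by linarith
qed


lemma Dl_repeat:
  assumes A: "A \<in> carrier_mat k n" and l: "length V + 1 = k" and u: "u \<in> set V"
  shows "Dl A k (V @ [u]) = 0"
proof -
  obtain i where i: "i < length V" "V ! i = u" using u by (auto simp: in_set_conv_nth)
  let ?cs = "map (col A) (V @ [u])"
  let ?M = "mat_of_cols k ?cs"
  have lc: "length ?cs = k" using l by simp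
  have M: "?M \<in> carrier_mat k k" using lc mat_of_cols_carrier(1)[of k ?cs] by simp
  have nthc: "?cs ! j \<in> carrier_vec k" if "j < length ?cs" for j
    using col_carr[OF A] that by (cases "j < length V") (auto simp: nth_append)
  have "col ?M i = ?cs ! i" using i lc nthc by (intro col_mat_of_cols) auto
  also have "\<dots> = col A u" using i by (simp add: nth_append)
  also have "\<dots> = ?cs ! length V" by (simp add: nth_append)
  also have "\<dots> = col ?M (length V)" using lc nthc l by (intro col_mat_of_cols[symmetric]) auto
  finally have "col ?M i = col ?M (length V)" .
  hence "det ?M = 0" using det_identical_cols[OF M, of i "length V"] i l by auto
  thus ?thesis unfolding Dl_def Dc_def .
qed

lemma sym_exchange:
  assumes A: "A \<in> carrier_mat k n"
    and B1: "B1 \<subseteq> {..<n}" "card B1 = k" "Dm A k B1 \<noteq> 0"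
    and B2: "B2 \<subseteq> {..<n}" "card B2 = k" "Dm A k B2 \<noteq> 0"
    and x: "x \<in> B2" "x \<notin> B1"
  shows "\<exists>u\<in>B1 - B2. Dm A k (insert x (B1 - {u})) \<noteq> 0 \<and> Dm A k (insert u (B2 - {x})) \<noteq> 0"
proof -
  have f1: "finite B1" and f2: "finite B2" using B1 B2 finite_subset by auto
  have "card B2 > 0" using f2 x by (auto simp: card_gt_0_iff)
  hence k1: "k \<ge> 1" using B2 by simp
  let ?I = "insert x B1"
  let ?L = "sorted_list_of_set ?I"
  let ?V = "sorted_list_of_set (B2 - {x})"
  have cI: "card ?I = k + 1" using f1 x B1 by simp
  have lL: "length ?L = k + 1" using cI by simp
  have cV: "card (B2 - {x}) + 1 = k" using B2 x f2 by (simp add: card_Diff_singleton) (use k1 in simp)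
  have lV: "length ?V = k - 1" using cV by simp
  define W where "W = map (col A) ?V"
  define U where "U = map (col A) ?L"
  define t where "t j = (-1)^j * Dc k (W @ [U!j]) * Dc k (take j U @ drop (Suc j) U)" for j
  have GP0: "(\<Sum>j<k+1. t j) = 0" unfolding t_def
    by (rule GP) (use k1 lL lV col_carr[OF A] in \<open>auto simp: W_def U_def\<close>)
  have tj: "t j = (-1)^j * Dl A k (?V @ [?L ! j]) * Dm A k (?I - {?L ! j})" if j: "j < k+1" for j
  proof -
    have "take j U @ drop (Suc j) U = map (col A) (take j ?L @ drop (Suc j) ?L)"
      unfolding U_def by (simp add: take_map drop_map)
    also have "take j ?L @ drop (Suc j) ?L = sorted_list_of_set (?I - {?L ! j})"
      by (rule sl_delete) (use f1 cI j in auto)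
    finally have "Dc k (take j U @ drop (Suc j) U) = Dm A k (?I - {?L ! j})"
      unfolding Dm_def Dl_def by simp
    moreover have "Dc k (W @ [U!j]) = Dl A k (?V @ [?L ! j])"
      unfolding Dl_def W_def U_def using j lL by simp
    ultimately show ?thesis unfolding t_def by simp
  qed
  have setL: "set ?L = ?I" by (rule set_sorted_list_of_set) (use f1 in auto)
  have "x \<in> set ?L" unfolding setL by simp
  then obtain j0 where j0: "j0 < k+1" "?L ! j0 = x" using lL by (auto simp: in_set_conv_nth)
  have t0: "t j0 \<noteq> 0"
  proof -
    have "insert x (B2 - {x}) = B2" using x by auto
    hence "Dm A k B2 = (-1)^(card {s\<in>B2 - {x}. x<s}) * Dl A k (?V @ [x])"
      using ins_sign[OF A, of "B2 - {x}" x] f2 cV unfolding Dm_def by simp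
    hence a: "Dl A k (?V @ [x]) \<noteq> 0" using B2 by auto
    have "?I - {x} = B1" using x by auto
    hence b: "Dm A k (?I - {?L ! j0}) \<noteq> 0" using j0 B1 by simp
    show ?thesis using tj[OF j0(1)] a b j0 by simp
  qed
  have "\<exists>j\<in>{..<k+1} - {j0}. t j \<noteq> 0"
  proof (rule ccontr)
    assume "\<not> ?thesis"
    hence "(\<Sum>j\<in>{..<k+1} - {j0}. t j) = 0" by (intro sum.neutral) auto
    moreover have "(\<Sum>j<k+1. t j) = t j0 + (\<Sum>j\<in>{..<k+1} - {j0}. t j)"
      by (rule sum.remove) (use j0 in auto)
    ultimately show False using GP0 t0 by simp
  qed
  then obtain j where j: "j < k+1" "j \<noteq> j0" "t j \<noteq> 0" by auto
  let ?u = "?L ! j"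
  have dL: "distinct ?L" by simp
  have ux: "?u \<noteq> x" using j j0 dL lL nth_eq_iff_index_eq[OF dL, of j j0] by auto
  have "?u \<in> set ?L" using j lL by (intro nth_mem) simp
  hence "?u \<in> ?I" unfolding setL .
  hence uB1: "?u \<in> B1" using ux by simp
  have d1: "Dl A k (?V @ [?u]) \<noteq> 0" and d2: "Dm A k (?I - {?u}) \<noteq> 0" using j tj[OF j(1)] by auto
  have uB2: "?u \<notin> B2"
  proof
    assume "?u \<in> B2"
    hence "?u \<in> set ?V" using ux f2 by simp
    moreover have "length ?V + 1 = k" using lV k1 by simp
    ultimately have "Dl A k (?V @ [?u]) = 0" using Dl_repeat[OF A] by blast
    thus False using d1 by simp
  qed
  have "Dm A k (insert ?u (B2 - {x})) = (-1)^(card {s\<in>B2 - {x}. ?u<s}) * Dl A k (?V @ [?u])"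
    using ins_sign[OF A, of "B2 - {x}" ?u] f2 cV uB2 unfolding Dm_def by simp
  hence e1: "Dm A k (insert ?u (B2 - {x})) \<noteq> 0" using d1 by simp
  have "?I - {?u} = insert x (B1 - {?u})" using ux by auto
  hence e2: "Dm A k (insert x (B1 - {?u})) \<noteq> 0" using d2 by simp
  show ?thesis using uB1 uB2 e1 e2 by blast
qed


context vec_space begin
lemma rank_full_minor:
  assumes A: "A \<in> carrier_mat n nc" and r: "rank A = n"
  shows "\<exists>I \<subseteq> {..<nc}. card I = n \<and> det (mat_of_cols n (map (col A) (sorted_list_of_set I))) \<noteq> 0"
proof -
  obtain S where S: "maximal S (\<lambda>T. T \<subseteq> set (cols A) \<and> lin_indpt T)"
    using maximal_exists[of "(\<lambda>T. T \<subseteq> set (cols A) \<and> lin_indpt T)" "card (set (cols A))" "{}"]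
    by (meson List.finite_set card_mono empty_iff empty_subsetI finite_lin_indpt2 rev_finite_subset)
  have cS: "card S = n" using rank_card_indpt[OF A S] r by simp
  have SA: "S \<subseteq> set (cols A)" and li: "lin_indpt S" using S unfolding maximal_def by auto
  define f where "f v = (SOME j. j < nc \<and> col A j = v)" for v
  have fv: "f v < nc \<and> col A (f v) = v" if "v \<in> S" for v
  proof -
    have "v \<in> set (cols A)" using SA that by auto
    hence "\<exists>j. j < nc \<and> col A j = v" using A by (auto simp: cols_def)
    thus ?thesis unfolding f_def by (rule someI_ex)
  qed
  define I where "I = f ` S"
  have inj: "inj_on f S" by (rule inj_onI) (metis fv)
  have finS: "finite S" using SA finite_subset by blast
  have cI: "card I = n" unfolding I_def using card_image[OF inj] cS by simp
  have In: "I \<subseteq> {..<nc}" unfolding I_def using fv by auto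
  have finI: "finite I" using In finite_subset by blast
  define L where "L = map (col A) (sorted_list_of_set I)"
  have setL: "set L = S"
  proof -
    have "set L = col A ` I" unfolding L_def using finI by simp
    also have "\<dots> = S" unfolding I_def image_image using fv by (auto simp: image_iff)
    finally show ?thesis .
  qed
  have injc: "inj_on (col A) I" unfolding I_def by (rule inj_onI) (auto simp: fv)
  have dL: "distinct L" unfolding L_def using injc finI by (simp add: distinct_map)
  have lL: "length L = n" unfolding L_def using cI by simp
  have Lc: "set L \<subseteq> carrier_vec n" using setL SA A by (auto simp: cols_def)
  let ?C = "mat_of_cols n L"
  have C: "?C \<in> carrier_mat n n" using lL mat_of_cols_carrier(1)[of n L] by simp
  have cC: "cols ?C = L" using Lc by simp
  have "rank ?C = n" by (rule lin_indpt_full_rank[OF C]) (use cC dL li setL in auto)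
  hence "det ?C \<noteq> 0" using det_rank_iff[OF C] by simp
  thus ?thesis using In cI unfolding L_def by blast
qed
end

lemma bases_nonempty:
  assumes A: "A \<in> carrier_mat k n" and r: "vec_space.rank k A = k"
  shows "\<exists>I \<subseteq> {..<n}. card I = k \<and> Dm A k I \<noteq> 0"
  using vec_space.rank_full_minor[OF A r] unfolding Dm_def Dl_def Dc_def by simp


definition sbases :: "'a set \<Rightarrow> 'a set set \<Rightarrow> bool" where
  "sbases E Bs \<longleftrightarrow> finite E \<and> Bs \<noteq> {} \<and> (\<forall>B\<in>Bs. B \<subseteq> E) \<and>
     (\<forall>B1\<in>Bs. \<forall>B2\<in>Bs. \<forall>x\<in>B2 - B1. \<exists>u\<in>B1 - B2. insert x (B1 - {u}) \<in> Bs \<and> insert u (B2 - {x}) \<in> Bs)"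

lemma sbasesD:
  assumes "sbases E Bs"
  shows "finite E" "Bs \<noteq> {}" "B \<in> Bs \<Longrightarrow> B \<subseteq> E" "B \<in> Bs \<Longrightarrow> finite B"
    "\<lbrakk>B1 \<in> Bs; B2 \<in> Bs; x \<in> B2; x \<notin> B1\<rbrakk> \<Longrightarrow> \<exists>u\<in>B1 - B2. insert x (B1 - {u}) \<in> Bs \<and> insert u (B2 - {x}) \<in> Bs"
proof -
  show "finite E" "Bs \<noteq> {}" using assms unfolding sbases_def by auto
  show "B \<in> Bs \<Longrightarrow> B \<subseteq> E" using assms unfolding sbases_def by auto
  show "B \<in> Bs \<Longrightarrow> finite B" using assms unfolding sbases_def by (meson finite_subset)
  have ex: "\<forall>B1\<in>Bs. \<forall>B2\<in>Bs. \<forall>x\<in>B2 - B1. \<exists>u\<in>B1 - B2. insert x (B1 - {u}) \<in> Bs \<and> insert u (B2 - {x}) \<in> Bs"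
    using assms unfolding sbases_def by (elim conjE) assumption
  show "\<lbrakk>B1 \<in> Bs; B2 \<in> Bs; x \<in> B2; x \<notin> B1\<rbrakk> \<Longrightarrow> \<exists>u\<in>B1 - B2. insert x (B1 - {u}) \<in> Bs \<and> insert u (B2 - {x}) \<in> Bs"
    using ex[rule_format, of B1 B2 x] by simp
qed


lemma augment:
  assumes sb: "sbases E Bs" and B: "B \<in> Bs"
  shows "B' \<in> Bs \<Longrightarrow> card (B \<inter> X) < card (B' \<inter> X) \<Longrightarrow> \<exists>Bs'\<in>Bs. B \<inter> X \<subset> Bs' \<inter> X"
proof (induction "card (B' - B)" arbitrary: B' rule: less_induct)
  case less
  have fB: "finite B" "finite B'" using sbasesD(4)[OF sb] B less.prems by auto
  have "\<not> B' \<inter> X \<subseteq> B \<inter> X"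
  proof
    assume "B' \<inter> X \<subseteq> B \<inter> X"
    hence "card (B' \<inter> X) \<le> card (B \<inter> X)" using fB by (intro card_mono) auto
    thus False using less.prems by simp
  qed
  then obtain x where x: "x \<in> B'" "x \<in> X" "x \<notin> B" by auto
  obtain u where u: "u \<in> B" "u \<notin> B'" "insert x (B - {u}) \<in> Bs" "insert u (B' - {x}) \<in> Bs"
    using sbasesD(5)[OF sb B less.prems(1) x(1) x(3)] by auto
  show ?case
  proof (cases "u \<in> X")
    case False
    have "B \<inter> X \<subset> insert x (B - {u}) \<inter> X" using x u False by auto
    thus ?thesis using u(3) by blast
  next
    case True
    let ?B'' = "insert u (B' - {x})"
    have c1: "?B'' - B = (B' - B) - {x}" using u x by auto
    have "card (?B'' - B) < card (B' - B)" unfolding c1 using x fB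
      by (intro psubset_card_mono) auto
    moreover have "card (?B'' \<inter> X) = card (B' \<inter> X)"
    proof -
      have "?B'' \<inter> X = insert u ((B' \<inter> X) - {x})" using True by auto
      moreover have "u \<notin> (B' \<inter> X) - {x}" using u by auto
      ultimately have "card (?B'' \<inter> X) = Suc (card ((B' \<inter> X) - {x}))" using fB by simp
      also have "\<dots> = card (B' \<inter> X)" by (rule card_Suc_Diff1) (use x fB in auto)
      finally show ?thesis .
    qed
    ultimately show ?thesis using less.hyps[of ?B''] u(4) less.prems(2) by simp
  qed
qed


lemma rb_char:
  assumes sb: "sbases E Bs"
  shows "I \<in> restr_bases Bs X \<longleftrightarrow> (\<exists>B\<in>Bs. I = B \<inter> X \<and> (\<forall>B'\<in>Bs. card (B' \<inter> X) \<le> card (B \<inter> X)))"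
proof
  assume "I \<in> restr_bases Bs X"
  then obtain B where B: "B \<in> Bs" "I = B \<inter> X" and nm: "\<not> (\<exists>B\<in>Bs. I \<subset> B \<inter> X)"
    unfolding restr_bases_def by auto
  have "\<forall>B'\<in>Bs. card (B' \<inter> X) \<le> card (B \<inter> X)"
  proof (rule ccontr)
    assume "\<not> ?thesis"
    then obtain B' where "B' \<in> Bs" "card (B \<inter> X) < card (B' \<inter> X)" by force
    from augment[OF sb B(1) this] nm B(2) show False by blast
  qed
  thus "\<exists>B\<in>Bs. I = B \<inter> X \<and> (\<forall>B'\<in>Bs. card (B' \<inter> X) \<le> card (B \<inter> X))" using B by blast
next
  assume "\<exists>B\<in>Bs. I = B \<inter> X \<and> (\<forall>B'\<in>Bs. card (B' \<inter> X) \<le> card (B \<inter> X))"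
  then obtain B where B: "B \<in> Bs" "I = B \<inter> X" and mx: "\<forall>B'\<in>Bs. card (B' \<inter> X) \<le> card (B \<inter> X)" by blast
  have "\<not> (\<exists>B'\<in>Bs. I \<subset> B' \<inter> X)"
  proof
    assume "\<exists>B'\<in>Bs. I \<subset> B' \<inter> X"
    then obtain B' where "B' \<in> Bs" "I \<subset> B' \<inter> X" by blast
    moreover have "finite B'" using sbasesD(4)[OF sb] \<open>B' \<in> Bs\<close> by simp
    ultimately have "card I < card (B' \<inter> X)" by (intro psubset_card_mono) auto
    thus False using mx \<open>B' \<in> Bs\<close> B(2) by fastforce
  qed
  thus "I \<in> restr_bases Bs X" unfolding restr_bases_def using B by blast
qed


lemma rb_card:
  assumes sb: "sbases E Bs" and I: "I \<in> restr_bases Bs X" and B: "B \<in> Bs"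
  shows "card (B \<inter> X) \<le> card I" and "card (B \<inter> X) = card I \<Longrightarrow> B \<inter> X \<in> restr_bases Bs X"
proof -
  obtain B0 where B0: "B0 \<in> Bs" "I = B0 \<inter> X" "\<forall>B'\<in>Bs. card (B' \<inter> X) \<le> card (B0 \<inter> X)"
    using I rb_char[OF sb] by blast
  show "card (B \<inter> X) \<le> card I" using B0 B by simp
  assume e: "card (B \<inter> X) = card I"
  have "\<forall>B'\<in>Bs. card (B' \<inter> X) \<le> card (B \<inter> X)" using B0 e by simp
  thus "B \<inter> X \<in> restr_bases Bs X" unfolding rb_char[OF sb] using B by blast
qed


lemma rb_exists:
  assumes sb: "sbases E Bs"
  shows "\<exists>B\<in>Bs. B \<inter> X \<in> restr_bases Bs X"
proof -
  obtain B0 where B0: "B0 \<in> Bs" using sbasesD(2)[OF sb] by blast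
  have bnd: "\<forall>B\<in>Bs. card (B \<inter> X) \<le> card E"
  proof
    fix B assume "B \<in> Bs"
    hence "B \<inter> X \<subseteq> E" using sbasesD(3)[OF sb] by blast
    thus "card (B \<inter> X) \<le> card E" using sbasesD(1)[OF sb] by (rule card_mono[rotated])
  qed
  have bnd2: "\<forall>B. B \<in> Bs \<longrightarrow> card (B \<inter> X) < Suc (card E)" using bnd by (simp add: less_Suc_eq_le)
  obtain B where "B \<in> Bs" "\<forall>B'. B' \<in> Bs \<longrightarrow> card (B' \<inter> X) \<le> card (B \<inter> X)"
    using Lattices_Big.ex_has_greatest_nat[of "\<lambda>B. B \<in> Bs", OF B0 bnd2] by blast
  hence "B \<inter> X \<in> restr_bases Bs X" unfolding rb_char[OF sb] by blast
  thus ?thesis using \<open>B \<in> Bs\<close> by blast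
qed


lemma card_swap:
  assumes "finite I" "x \<in> I" "u \<notin> I"
  shows "card (insert u (I - {x})) = card I"
proof -
  have "card (insert u (I - {x})) = Suc (card (I - {x}))" using assms by simp
  also have "\<dots> = card I" by (rule card_Suc_Diff1) (use assms in auto)
  finally show ?thesis .
qed

lemma cb_intro: "B \<in> Bs \<Longrightarrow> B \<inter> X \<in> restr_bases Bs X \<Longrightarrow> B - X \<in> contr_bases Bs X"
  unfolding contr_bases_def by blast

lemma cb_elim: "K \<in> contr_bases Bs X \<Longrightarrow> \<exists>B. K = B - X \<and> B \<in> Bs \<and> B \<inter> X \<in> restr_bases Bs X"
  unfolding contr_bases_def by blast

lemma rb_matroid:
  assumes sb: "sbases E Bs" and XE: "X \<subseteq> E"
  shows "matroid_bases X (restr_bases Bs X)"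
  unfolding matroid_bases_def
proof (intro conjI ballI)
  show "finite X" using sbasesD(1)[OF sb] XE finite_subset by blast
  show "restr_bases Bs X \<noteq> {}" using rb_exists[OF sb] by blast
  fix I assume "I \<in> restr_bases Bs X"
  thus "I \<subseteq> X" unfolding restr_bases_def by auto
next
  fix I1 I2 x assume I1: "I1 \<in> restr_bases Bs X" and I2: "I2 \<in> restr_bases Bs X" and x: "x \<in> I1 - I2"
  obtain B1 where B1: "B1 \<in> Bs" "I1 = B1 \<inter> X" using I1 rb_char[OF sb] by blast
  obtain B2 where B2: "B2 \<in> Bs" "I2 = B2 \<inter> X" using I2 rb_char[OF sb] by blast
  have fB: "finite B1" "finite B2" using sbasesD(4)[OF sb] B1 B2 by auto
  have xB: "x \<in> B1" "x \<notin> B2" "x \<in> X" using x B1 B2 by auto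
  obtain u where u: "u \<in> B2" "u \<notin> B1" "insert x (B2 - {u}) \<in> Bs" "insert u (B1 - {x}) \<in> Bs"
    using sbasesD(5)[OF sb B2(1) B1(1) xB(1) xB(2)] by auto
  have uX: "u \<in> X"
  proof (rule ccontr)
    assume "u \<notin> X"
    hence "insert x (B2 - {u}) \<inter> X = insert x I2" using B2 xB by auto
    moreover have "card (insert x I2) = Suc (card I2)" using fB B2 x by simp
    ultimately show False using rb_card(1)[OF sb I2 u(3)] by simp
  qed
  have e: "insert u (B1 - {x}) \<inter> X = insert u (I1 - {x})" using B1 uX by auto
  have "card (insert u (I1 - {x})) = card I1" by (rule card_swap) (use fB B1 x u in auto)
  hence "insert u (I1 - {x}) \<in> restr_bases Bs X" using rb_card(2)[OF sb I1 u(4)] e by simp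
  moreover have "u \<in> I2 - I1" using u uX B1 B2 by auto
  ultimately show "\<exists>y\<in>I2 - I1. insert y (I1 - {x}) \<in> restr_bases Bs X" by blast
qed

lemma cb_matroid:
  assumes sb: "sbases E Bs" and XE: "X \<subseteq> E"
  shows "matroid_bases (E - X) (contr_bases Bs X)"
  unfolding matroid_bases_def
proof (intro conjI ballI)
  show "finite (E - X)" using sbasesD(1)[OF sb] by simp
  obtain B where "B \<in> Bs" "B \<inter> X \<in> restr_bases Bs X" using rb_exists[OF sb, of X] by blast
  hence "B - X \<in> contr_bases Bs X" by (rule cb_intro)
  thus "contr_bases Bs X \<noteq> {}" by auto
  fix K assume "K \<in> contr_bases Bs X"
  then obtain B where "K = B - X" "B \<in> Bs" using cb_elim by blast
  thus "K \<subseteq> E - X" using sbasesD(3)[OF sb] by blast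
next
  fix K1 K2 x assume K1: "K1 \<in> contr_bases Bs X" and K2: "K2 \<in> contr_bases Bs X" and x: "x \<in> K1 - K2"
  obtain B1 where B1: "B1 \<in> Bs" "K1 = B1 - X" "B1 \<inter> X \<in> restr_bases Bs X" using cb_elim[OF K1] by blast
  obtain B2 where B2: "B2 \<in> Bs" "K2 = B2 - X" "B2 \<inter> X \<in> restr_bases Bs X" using cb_elim[OF K2] by blast
  have fB: "finite B1" "finite B2" using sbasesD(4)[OF sb] B1 B2 by auto
  have xB: "x \<in> B1" "x \<notin> B2" "x \<notin> X" using x B1 B2 by auto
  obtain u where u: "u \<in> B2" "u \<notin> B1" "insert x (B2 - {u}) \<in> Bs" "insert u (B1 - {x}) \<in> Bs"
    using sbasesD(5)[OF sb B2(1) B1(1) xB(1) xB(2)] by auto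
  have uX: "u \<notin> X"
  proof
    assume "u \<in> X"
    hence "insert u (B1 - {x}) \<inter> X = insert u (B1 \<inter> X)" using xB by auto
    moreover have "card (insert u (B1 \<inter> X)) = Suc (card (B1 \<inter> X))" using fB u by simp
    ultimately show False using rb_card(1)[OF sb B1(3) u(4)] by simp
  qed
  have "insert u (B1 - {x}) \<inter> X = B1 \<inter> X" using uX xB by auto
  hence "insert u (B1 - {x}) - X \<in> contr_bases Bs X" using u(4) B1(3) cb_intro by metis
  moreover have "insert u (B1 - {x}) - X = insert u (K1 - {x})" using B1 uX by auto
  moreover have "u \<in> K2 - K1" using u uX B1 B2 by auto
  ultimately show "\<exists>y\<in>K2 - K1. insert y (K1 - {x}) \<in> contr_bases Bs X" by metis
qed

lemma join_rb_cb:
  assumes sb: "sbases E Bs" and J: "J \<in> restr_bases Bs X"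
  shows "B0 \<in> Bs \<Longrightarrow> B0 \<inter> X \<in> restr_bases Bs X \<Longrightarrow> J \<union> (B0 - X) \<in> Bs"
proof (induction "card (B0 \<inter> X - J)" arbitrary: B0 rule: less_induct)
  case less
  obtain B2 where B2: "B2 \<in> Bs" "J = B2 \<inter> X" using J rb_char[OF sb] by blast
  have fB: "finite B0" "finite B2" using sbasesD(4)[OF sb] B2 less.prems by auto
  show ?case
  proof (cases "B0 \<inter> X \<subseteq> J")
    case True
    have "card J \<le> card (B0 \<inter> X)" using rb_card(1)[OF sb less.prems(2) B2(1)] B2 by simp
    hence "B0 \<inter> X = J" using True fB B2 by (intro card_seteq) auto
    hence "J \<union> (B0 - X) = B0" by auto
    thus ?thesis using less.prems by simp
  next
    case False
    then obtain z where z: "z \<in> B0" "z \<in> X" "z \<notin> J" by auto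
    hence zB2: "z \<notin> B2" using B2 by auto
    obtain u where u: "u \<in> B2" "u \<notin> B0" "insert z (B2 - {u}) \<in> Bs" "insert u (B0 - {z}) \<in> Bs"
      using sbasesD(5)[OF sb B2(1) less.prems(1) z(1) zB2] by auto
    have uX: "u \<in> X"
    proof (rule ccontr)
      assume "u \<notin> X"
      hence "insert z (B2 - {u}) \<inter> X = insert z J" using B2 z by auto
      moreover have "card (insert z J) = Suc (card J)" using fB B2 z by simp
      ultimately show False using rb_card(1)[OF sb J u(3)] by simp
    qed
    let ?B = "insert u (B0 - {z})"
    have e: "?B \<inter> X = insert u (B0 \<inter> X - {z})" using uX by auto
    have "card (insert u (B0 \<inter> X - {z})) = card (B0 \<inter> X)" by (rule card_swap) (use fB z u in auto)
    hence rb: "?B \<inter> X \<in> restr_bases Bs X" using rb_card(2)[OF sb less.prems(2) u(4)] e by simp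
    have "?B \<inter> X - J = (B0 \<inter> X - J) - {z}" using e uX B2 u by auto
    hence "card (?B \<inter> X - J) < card (B0 \<inter> X - J)" using z fB by (intro psubset_card_mono) auto
    hence "J \<union> (?B - X) \<in> Bs" using less.hyps u(4) rb by blast
    moreover have "?B - X = B0 - X" using uX z by auto
    ultimately show ?thesis by simp
  qed
qed


definition brel :: "'a set set \<Rightarrow> 'a \<Rightarrow> 'a \<Rightarrow> bool" where
  "brel Bm x y \<longleftrightarrow> (\<exists>B\<in>Bm. x \<in> B \<and> y \<notin> B \<and> insert y (B - {x}) \<in> Bm)"

lemma brel_sym: "brel Bm x y \<Longrightarrow> brel Bm y x"
  unfolding brel_def
proof -
  assume "\<exists>B\<in>Bm. x \<in> B \<and> y \<notin> B \<and> insert y (B - {x}) \<in> Bm"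
  then obtain B where B: "B \<in> Bm" "x \<in> B" "y \<notin> B" "insert y (B - {x}) \<in> Bm" by blast
  have "insert x (insert y (B - {x}) - {y}) = B" using B by auto
  thus "\<exists>B\<in>Bm. y \<in> B \<and> x \<notin> B \<and> insert x (B - {y}) \<in> Bm"
    using B by (intro bexI[of _ "insert y (B - {x})"]) auto
qed

lemma mbD:
  assumes "matroid_bases E Bm"
  shows "finite E" "Bm \<noteq> {}" "B \<in> Bm \<Longrightarrow> B \<subseteq> E" "B \<in> Bm \<Longrightarrow> finite B"
    "\<lbrakk>B1 \<in> Bm; B2 \<in> Bm; x \<in> B1; x \<notin> B2\<rbrakk> \<Longrightarrow> \<exists>y\<in>B2 - B1. insert y (B1 - {x}) \<in> Bm"
proof -
  show "finite E" "Bm \<noteq> {}" using assms unfolding matroid_bases_def by auto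
  show "B \<in> Bm \<Longrightarrow> B \<subseteq> E" using assms unfolding matroid_bases_def by auto
  show "B \<in> Bm \<Longrightarrow> finite B" using assms unfolding matroid_bases_def by (meson finite_subset)
  have ex: "\<forall>B1\<in>Bm. \<forall>B2\<in>Bm. \<forall>x\<in>B1 - B2. \<exists>y\<in>B2 - B1. insert y (B1 - {x}) \<in> Bm"
    using assms unfolding matroid_bases_def by (elim conjE) assumption
  show "\<lbrakk>B1 \<in> Bm; B2 \<in> Bm; x \<in> B1; x \<notin> B2\<rbrakk> \<Longrightarrow> \<exists>y\<in>B2 - B1. insert y (B1 - {x}) \<in> Bm"
    using ex[rule_format, of B1 B2 x] by simp
qed

definition closedb :: "'a set set \<Rightarrow> 'a set \<Rightarrow> bool" where
  "closedb Bm G \<longleftrightarrow> (\<forall>z w. brel Bm z w \<longrightarrow> (z \<in> G \<longleftrightarrow> w \<in> G))"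

lemma exch_brel:
  assumes mb: "matroid_bases E Bm" and J: "J \<in> Bm" "J' \<in> Bm" and x: "x \<in> J" "x \<notin> J'"
  obtains y where "y \<in> J'" "y \<notin> J" "insert y (J - {x}) \<in> Bm" "brel Bm x y"
proof -
  obtain y where y: "y \<in> J' - J" "insert y (J - {x}) \<in> Bm" using mbD(5)[OF mb J x] by blast
  have "brel Bm x y" unfolding brel_def using J(1) x y by blast
  thus ?thesis using y that by blast
qed

lemma card_closed:
  assumes mb: "matroid_bases E Bm" and G: "closedb Bm G" and J': "J' \<in> Bm"
  shows "J \<in> Bm \<Longrightarrow> card (J \<inter> G) = card (J' \<inter> G)"
proof (induction "card (J - J')" arbitrary: J rule: less_induct)
  case less
  have fJ: "finite J" "finite J'" using mbD(4)[OF mb] less.prems J' by auto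
  show ?case
  proof (cases "J - J' = {}")
    case True
    have "J' - J = {}"
    proof (rule ccontr)
      assume "J' - J \<noteq> {}"
      then obtain x where "x \<in> J'" "x \<notin> J" by auto
      then obtain y where "y \<in> J" "y \<notin> J'" using mbD(5)[OF mb J' less.prems] by blast
      thus False using True by auto
    qed
    hence "J = J'" using True by auto
    thus ?thesis by simp
  next
    case False
    then obtain x where x: "x \<in> J" "x \<notin> J'" by auto
    obtain y where y: "y \<in> J'" "y \<notin> J" "insert y (J - {x}) \<in> Bm" "brel Bm x y"
      using exch_brel[OF mb less.prems J' x] by blast
    let ?J1 = "insert y (J - {x})"
    have xy: "x \<in> G \<longleftrightarrow> y \<in> G" using G y(4) unfolding closedb_def by blast
    have "card (?J1 \<inter> G) = card (J \<inter> G)"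
    proof (cases "x \<in> G")
      case True
      hence "?J1 \<inter> G = insert y (J \<inter> G - {x})" using xy by auto
      moreover have "card (insert y (J \<inter> G - {x})) = card (J \<inter> G)"
        by (rule card_swap) (use fJ x y True in auto)
      ultimately show ?thesis by simp
    next
      case False
      hence "?J1 \<inter> G = J \<inter> G" using xy by auto
      thus ?thesis by simp
    qed
    moreover have "card (?J1 - J') < card (J - J')"
    proof -
      have "?J1 - J' = (J - J') - {x}" using y x by auto
      thus ?thesis using x fJ by (intro psubset_card_mono) auto
    qed
    ultimately show ?thesis using less.hyps[of ?J1] y(3) by simp
  qed
qed

lemma swap_closed:
  assumes mb: "matroid_bases E Bm" and G: "closedb Bm G" and J': "J' \<in> Bm"
  shows "J \<in> Bm \<Longrightarrow> (J - G) \<union> (J' \<inter> G) \<in> Bm"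
proof (induction "card (J \<inter> G - J')" arbitrary: J rule: less_induct)
  case less
  have fJ: "finite J" "finite J'" using mbD(4)[OF mb] less.prems J' by auto
  show ?case
  proof (cases "J \<inter> G \<subseteq> J'")
    case True
    have "card (J \<inter> G) = card (J' \<inter> G)" by (rule card_closed[OF mb G J' less.prems])
    hence "J \<inter> G = J' \<inter> G" using True fJ by (intro card_seteq) auto
    hence "(J - G) \<union> (J' \<inter> G) = J" by auto
    thus ?thesis using less.prems by simp
  next
    case False
    then obtain e where e: "e \<in> J" "e \<in> G" "e \<notin> J'" by auto
    obtain y where y: "y \<in> J'" "y \<notin> J" "insert y (J - {e}) \<in> Bm" "brel Bm e y"
      using exch_brel[OF mb less.prems J' e(1) e(3)] by blast
    have yG: "y \<in> G" using G y(4) e(2) unfolding closedb_def by blast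
    let ?J1 = "insert y (J - {e})"
    have "?J1 \<inter> G - J' = (J \<inter> G - J') - {e}" using y yG e by auto
    hence "card (?J1 \<inter> G - J') < card (J \<inter> G - J')" using e fJ by (intro psubset_card_mono) auto
    hence "(?J1 - G) \<union> (J' \<inter> G) \<in> Bm" using less.hyps y(3) by blast
    moreover have "?J1 - G = J - G" using yG e by auto
    ultimately show ?thesis by simp
  qed
qed

lemma restrict_closed:
  assumes mb: "matroid_bases E Bm" and G: "closedb Bm G" and GE: "G \<subseteq> E"
  shows "matroid_bases G ((\<lambda>J. J \<inter> G) ` Bm)"
  unfolding matroid_bases_def
proof (intro conjI ballI)
  show "finite G" using mbD(1)[OF mb] GE finite_subset by blast
  show "(\<lambda>J. J \<inter> G) ` Bm \<noteq> {}" using mbD(2)[OF mb] by simp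
  fix I assume "I \<in> (\<lambda>J. J \<inter> G) ` Bm"
  thus "I \<subseteq> G" by auto
next
  fix I1 I2 x assume I1: "I1 \<in> (\<lambda>J. J \<inter> G) ` Bm" and I2: "I2 \<in> (\<lambda>J. J \<inter> G) ` Bm" and x: "x \<in> I1 - I2"
  obtain J where J: "J \<in> Bm" "I1 = J \<inter> G" using I1 by blast
  obtain J' where J': "J' \<in> Bm" "I2 = J' \<inter> G" using I2 by blast
  have xJ: "x \<in> J" "x \<notin> J'" "x \<in> G" using x J J' by auto
  obtain y where y: "y \<in> J'" "y \<notin> J" "insert y (J - {x}) \<in> Bm" "brel Bm x y"
    using exch_brel[OF mb J(1) J'(1) xJ(1,2)] by blast
  have yG: "y \<in> G" using G y(4) xJ(3) unfolding closedb_def by blast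
  have "insert y (I1 - {x}) = insert y (J - {x}) \<inter> G" using J yG by auto
  hence "insert y (I1 - {x}) \<in> (\<lambda>J. J \<inter> G) ` Bm" using y(3) by blast
  moreover have "y \<in> I2 - I1" using y yG J J' by auto
  ultimately show "\<exists>y\<in>I2 - I1. insert y (I1 - {x}) \<in> (\<lambda>J. J \<inter> G) ` Bm" by blast
qed

lemma conn_chain:
  assumes mb: "matroid_bases E Bm" and con: "connected_matroid E Bm" and x: "x \<in> E" and y: "y \<in> E"
  shows "(brel Bm)\<^sup>*\<^sup>* x y"
proof (rule ccontr)
  assume ny: "\<not> (brel Bm)\<^sup>*\<^sup>* x y"
  define F where "F = {z \<in> E. (brel Bm)\<^sup>*\<^sup>* x z}"
  have brelE: "w \<in> E \<and> z \<in> E" if zw0: "brel Bm z w" for z w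
  proof -
    obtain B where B: "B \<in> Bm" "z \<in> B" "w \<notin> B" "insert w (B - {z}) \<in> Bm"
      using zw0 unfolding brel_def by blast
    have "B \<subseteq> E" "insert w (B - {z}) \<subseteq> E" using mbD(3)[OF mb] B by auto
    thus ?thesis using B by auto
  qed
  have clF: "closedb Bm F" unfolding closedb_def
  proof (intro allI impI)
    fix z w assume zw: "brel Bm z w"
    have wz: "brel Bm w z" using brel_sym[OF zw] .
    show "z \<in> F \<longleftrightarrow> w \<in> F"
    proof
      assume "z \<in> F"
      hence "(brel Bm)\<^sup>*\<^sup>* x z" unfolding F_def by simp
      hence "(brel Bm)\<^sup>*\<^sup>* x w" using zw by (rule rtranclp.rtrancl_into_rtrancl)
      thus "w \<in> F" unfolding F_def using brelE[OF zw] by simp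
    next
      assume "w \<in> F"
      hence "(brel Bm)\<^sup>*\<^sup>* x w" unfolding F_def by simp
      hence "(brel Bm)\<^sup>*\<^sup>* x z" using wz by (rule rtranclp.rtrancl_into_rtrancl)
      thus "z \<in> F" unfolding F_def using brelE[OF zw] by simp
    qed
  qed
  have clF2: "closedb Bm (E - F)" unfolding closedb_def
  proof (intro allI impI)
    fix z w assume zw: "brel Bm z w"
    have "z \<in> F \<longleftrightarrow> w \<in> F" using clF zw unfolding closedb_def by blast
    thus "z \<in> E - F \<longleftrightarrow> w \<in> E - F" using brelE[OF zw] by blast
  qed
  have FE: "F \<subseteq> E" unfolding F_def by auto
  have xF: "x \<in> F" unfolding F_def using x by simp
  have yF: "y \<notin> F" unfolding F_def using ny by simp
  define B1 where "B1 = (\<lambda>J. J \<inter> F) ` Bm"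
  define B2 where "B2 = (\<lambda>J. J \<inter> (E - F)) ` Bm"
  have m1: "matroid_bases F B1" unfolding B1_def by (rule restrict_closed[OF mb clF FE])
  have m2: "matroid_bases (E - F) B2" unfolding B2_def by (rule restrict_closed[OF mb clF2]) auto
  have ds: "Bm = direct_sum_bases B1 B2"
  proof
    show "Bm \<subseteq> direct_sum_bases B1 B2"
    proof
      fix J assume J: "J \<in> Bm"
      hence "J = (J \<inter> F) \<union> (J \<inter> (E - F))" using mbD(3)[OF mb J] by auto
      moreover have "J \<inter> F \<in> B1" "J \<inter> (E - F) \<in> B2" unfolding B1_def B2_def using J by auto
      ultimately show "J \<in> direct_sum_bases B1 B2" unfolding direct_sum_bases_def by blast
    qed
  next
    show "direct_sum_bases B1 B2 \<subseteq> Bm"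
    proof
      fix C assume "C \<in> direct_sum_bases B1 B2"
      then obtain C1 C2 where C: "C = C1 \<union> C2" "C1 \<in> B1" "C2 \<in> B2"
        unfolding direct_sum_bases_def by blast
      obtain J where J1: "J \<in> Bm" "C1 = J \<inter> F" using C(2) unfolding B1_def by blast
      obtain J' where J2: "J' \<in> Bm" "C2 = J' \<inter> (E - F)" using C(3) unfolding B2_def by blast
      have J: "J \<in> Bm" "J' \<in> Bm" using J1 J2 by auto
      have "(J' - F) \<union> (J \<inter> F) \<in> Bm" by (rule swap_closed[OF mb clF J(1) J(2)])
      moreover have "J' \<inter> (E - F) = J' - F" using mbD(3)[OF mb J(2)] by auto
      ultimately show "C \<in> Bm" using C J1 J2 by (simp add: Un_commute)
    qed
  qed
  have "F \<noteq> {}" "E - F \<noteq> {}" "F \<inter> (E - F) = {}" "F \<union> (E - F) = E" using xF yF y FE by auto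
  hence "\<exists>E1 E2 \<B>1 \<B>2. E1 \<noteq> {} \<and> E2 \<noteq> {} \<and> E1 \<inter> E2 = {} \<and> E1 \<union> E2 = E \<and>
          matroid_bases E1 \<B>1 \<and> matroid_bases E2 \<B>2 \<and> Bm = direct_sum_bases \<B>1 \<B>2"
    using m1 m2 ds by (intro exI[of _ F] exI[of _ "E - F"] exI[of _ B1] exI[of _ B2]) simp
  thus False using con unfolding connected_matroid_def by blast
qed


lemma cyc_from_interval:
  assumes "lo \<le> hi" "hi < n" "X = {lo..hi}"
  shows "cyclic_interval n X"
proof -
  have "X = {(lo + i) mod n | i. i < Suc (hi - lo)}"
  proof
    show "X \<subseteq> {(lo + i) mod n | i. i < Suc (hi - lo)}"
    proof
      fix z assume "z \<in> X"
      hence z: "lo \<le> z" "z \<le> hi" using assms by auto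
      hence "z = (lo + (z - lo)) mod n" "z - lo < Suc (hi - lo)" using assms by auto
      thus "z \<in> {(lo + i) mod n | i. i < Suc (hi - lo)}" by blast
    qed
    show "{(lo + i) mod n | i. i < Suc (hi - lo)} \<subseteq> X"
    proof
      fix z assume "z \<in> {(lo + i) mod n | i. i < Suc (hi - lo)}"
      then obtain i where i: "i < Suc (hi - lo)" "z = (lo + i) mod n" by blast
      hence "lo + i < n" using assms by simp
      hence "z = lo + i" using i by simp
      thus "z \<in> X" using i assms by auto
    qed
  qed
  moreover have "lo < n" "1 \<le> Suc (hi - lo)" "Suc (hi - lo) \<le> n" using assms by auto
  ultimately show ?thesis unfolding cyclic_interval_def by blast
qed


lemma cyc_from_cointerval:
  assumes "0 < ylo" "ylo \<le> yhi" "Suc yhi < n" "X = {z. z < n \<and> (z < ylo \<or> yhi < z)}"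
  shows "cyclic_interval n X"
proof -
  define a where "a = Suc yhi"
  define m where "m = n - Suc (yhi - ylo)"
  have "X = {(a + i) mod n | i. i < m}"
  proof
    show "X \<subseteq> {(a + i) mod n | i. i < m}"
    proof
      fix z assume "z \<in> X"
      hence z: "z < n" "z < ylo \<or> yhi < z" using assms by auto
      show "z \<in> {(a + i) mod n | i. i < m}"
      proof (cases "yhi < z")
        case True
        hence "z = (a + (z - a)) mod n" "z - a < m" using z assms unfolding a_def m_def by auto
        thus ?thesis by blast
      next
        case False
        hence zy: "z < ylo" using z by simp
        have "a + (z + n - a) = z + n" using assms unfolding a_def by simp
        hence "(a + (z + n - a)) mod n = z" using z by simp
        moreover have "z + n - a < m" using zy assms unfolding a_def m_def by auto
        ultimately show ?thesis by (intro CollectI exI[of _ "z + n - a"]) auto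
      qed
    qed
    show "{(a + i) mod n | i. i < m} \<subseteq> X"
    proof
      fix z assume "z \<in> {(a + i) mod n | i. i < m}"
      then obtain i where i: "i < m" "z = (a + i) mod n" by blast
      show "z \<in> X"
      proof (cases "a + i < n")
        case True
        hence "z = a + i" using i by simp
        thus ?thesis using True assms unfolding a_def by auto
      next
        case False
        have "a + i < n + n" using i assms unfolding a_def m_def by auto
        hence "z = a + i - n" using False i by (simp add: mod_if)
        moreover have "a + i - n < ylo" using i False assms unfolding a_def m_def by auto
        ultimately show ?thesis using assms by auto
      qed
    qed
  qed
  moreover have "a < n" "1 \<le> m" "m \<le> n" using assms unfolding a_def m_def by auto
  ultimately show ?thesis unfolding cyclic_interval_def by blast
qed


lemma noncyc_cross:
  assumes Xn: "X \<subseteq> {..<n}" and ne: "X \<noteq> {}" and nc: "\<not> cyclic_interval n X"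
  shows "\<exists>p\<in>X. \<exists>q\<in>X. \<exists>y1 y2. y1 < n \<and> y2 < n \<and> y1 \<notin> X \<and> y2 \<notin> X \<and>
           y1 < p \<and> p < y2 \<and> (q < y1 \<or> y2 < q)"
proof -
  have fX: "finite X" using Xn finite_subset by blast
  define lo where "lo = Min X"
  define hi where "hi = Max X"
  have lo: "lo \<in> X" "\<forall>z\<in>X. lo \<le> z" unfolding lo_def using fX ne by auto
  have hi: "hi \<in> X" "\<forall>z\<in>X. z \<le> hi" unfolding hi_def using fX ne by auto
  have hin: "hi < n" using hi Xn by auto
  show ?thesis
  proof (cases "\<forall>z. lo \<le> z \<and> z \<le> hi \<longrightarrow> z \<in> X")
    case True
    have "X = {lo..hi}"
    proof (intro equalityI subsetI)
      fix z assume "z \<in> X" thus "z \<in> {lo..hi}" using lo(2) hi(2) by simp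
    next
      fix z assume "z \<in> {lo..hi}" thus "z \<in> X" using True by simp
    qed
    moreover have "lo \<le> hi" using lo hi by auto
    ultimately have "cyclic_interval n X" using cyc_from_interval[of lo hi n X] hin by simp
    thus ?thesis using nc by simp
  next
    case False
    then obtain z where z: "lo \<le> z" "z \<le> hi" "z \<notin> X" by blast
    have "z \<noteq> lo" "z \<noteq> hi" using z lo hi by auto
    hence y: "lo < z" "z < hi" "z \<notin> X" using z by auto
    define y where "y = z"
    note y = y[folded y_def]
    have yn: "y < n" using y hin by simp
    show ?thesis
    proof (cases "\<exists>y2. y2 < n \<and> y2 \<notin> X \<and> (y2 < lo \<or> hi < y2)")
      case True
      then obtain y2 where y2: "y2 < n" "y2 \<notin> X" "y2 < lo \<or> hi < y2" by blast
      show ?thesis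
      proof (cases "y2 < lo")
        case True
        thus ?thesis using y y2 yn lo hi by (intro bexI[of _ lo] bexI[of _ hi] exI[of _ y2] exI[of _ y]) auto
      next
        case False
        hence "hi < y2" using y2 by simp
        thus ?thesis using y y2 yn lo hi by (intro bexI[of _ hi] bexI[of _ lo] exI[of _ y] exI[of _ y2]) auto
      qed
    next
      case False
      hence allin: "\<forall>z<n. z \<notin> X \<longrightarrow> lo \<le> z \<and> z \<le> hi" by (meson not_le)
      have n0: "0 < n" using hin by simp
      have lo0: "lo = 0"
      proof (rule ccontr)
        assume "lo \<noteq> 0"
        hence "0 \<notin> X" using lo by auto
        thus False using allin[rule_format, of 0] n0 \<open>lo \<noteq> 0\<close> by simp
      qed
      have hin1: "Suc hi = n"
      proof (rule ccontr)
        assume "Suc hi \<noteq> n"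
        hence "Suc hi < n" using hin by simp
        have "\<not> (n - 1 \<le> hi)" using \<open>Suc hi < n\<close> by simp
        hence "n - 1 \<notin> X" using hi(2) by blast
        thus False using allin[rule_format, of "n - 1"] \<open>Suc hi < n\<close> by linarith
      qed
      define Y where "Y = {..<n} - X"
      have fY: "finite Y" unfolding Y_def by simp
      have yY: "y \<in> Y" unfolding Y_def using y yn by simp
      have Yne: "Y \<noteq> {}" using yY by auto
      define ylo where "ylo = Min Y"
      define yhi where "yhi = Max Y"
      have ylo: "ylo \<in> Y" "\<forall>z\<in>Y. ylo \<le> z" unfolding ylo_def using fY Yne by auto
      have yhi: "yhi \<in> Y" "\<forall>z\<in>Y. z \<le> yhi" unfolding yhi_def using fY Yne by auto
      have ylo0: "0 < ylo"
      proof (rule ccontr)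
        assume "\<not> 0 < ylo"
        hence "ylo = 0" by simp
        thus False using ylo(1) lo(1) lo0 unfolding Y_def by simp
      qed
      have yhin: "Suc yhi < n"
      proof -
        have "yhi \<noteq> hi" using yhi hi unfolding Y_def by auto
        moreover have "yhi < n" using yhi unfolding Y_def by auto
        ultimately show ?thesis using hin1 by simp
      qed
      have yle: "ylo \<le> yhi" using ylo yhi by auto
      show ?thesis
      proof (cases "\<exists>x\<in>X. ylo < x \<and> x < yhi")
        case True
        then obtain x where x: "x \<in> X" "ylo < x" "x < yhi" by blast
        show ?thesis using x ylo yhi lo lo0 ylo0 yhin unfolding Y_def
          by (intro bexI[of _ x] bexI[of _ 0] exI[of _ ylo] exI[of _ yhi]) auto
      next
        case False
        have "X = {z. z < n \<and> (z < ylo \<or> yhi < z)}"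
        proof
          show "X \<subseteq> {z. z < n \<and> (z < ylo \<or> yhi < z)}"
          proof
            fix z assume z: "z \<in> X"
            hence "z \<noteq> ylo" "z \<noteq> yhi" using ylo yhi unfolding Y_def by auto
            moreover have "\<not> (ylo < z \<and> z < yhi)" using False z by blast
            moreover have "z < n" using z Xn by auto
            ultimately show "z \<in> {z. z < n \<and> (z < ylo \<or> yhi < z)}" by auto
          qed
          show "{z. z < n \<and> (z < ylo \<or> yhi < z)} \<subseteq> X"
          proof
            fix z assume z: "z \<in> {z. z < n \<and> (z < ylo \<or> yhi < z)}"
            show "z \<in> X"
            proof (rule ccontr)
              assume "z \<notin> X"
              hence "z \<in> Y" using z unfolding Y_def by simp
              hence "ylo \<le> z" "z \<le> yhi" using ylo(2) yhi(2) by auto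
              thus False using z by auto
            qed
          qed
        qed
        hence "cyclic_interval n X" using cyc_from_cointerval[OF ylo0 yle yhin] by simp
        thus ?thesis using nc by simp
      qed
    qed
  qed
qed


lemma chain_cross:
  assumes "R\<^sup>*\<^sup>* x z" "P x" "\<not> P z"
  shows "\<exists>a b. R a b \<and> P a \<and> \<not> P b"
  using assms
proof (induction rule: rtranclp_induct)
  case base then show ?case by simp
next
  case (step y z)
  show ?case
  proof (cases "P y")
    case True then show ?thesis using step by blast
  next
    case False then show ?thesis using step by blast
  qed
qed

lemma cross_contra:
  fixes D :: "nat \<Rightarrow> nat \<Rightarrow> real" and a b c d :: nat
  assumes sym: "\<And>x y. D x y = D y x"
    and nn: "\<And>x y. x \<in> {a,b,c,d} \<Longrightarrow> y \<in> {a,b,c,d} \<Longrightarrow> x \<noteq> y \<Longrightarrow> D x y \<ge> 0"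
    and tt: "\<And>w x y z. w \<in> {a,b,c,d} \<Longrightarrow> x \<in> {a,b,c,d} \<Longrightarrow> y \<in> {a,b,c,d} \<Longrightarrow> z \<in> {a,b,c,d} \<Longrightarrow>
              w < x \<Longrightarrow> x < y \<Longrightarrow> y < z \<Longrightarrow> D w y * D x z = D w x * D y z + D w z * D x y"
    and pos: "D a c > 0" "D b d > 0" and zero: "D a b = 0"
    and ab: "a \<noteq> b" and btw: "min a b < c" "c < max a b" and out: "d < min a b \<or> max a b < d"
  shows False
proof (cases "a < b")
  case True
  show False
  proof (cases "d < a")
    case True
    have e: "D d c * D a b = D d a * D c b + D d b * D a c" using tt[of d a c b] True \<open>a < b\<close> btw by simp
    have "D d a \<ge> 0" "D c b \<ge> 0" using nn[of d a] nn[of c b] True \<open>a < b\<close> btw by auto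
    hence "D d a * D c b \<ge> 0" by simp
    moreover have "D d b * D a c > 0" using pos sym[of d b] by simp
    ultimately show False using e zero by simp
  next
    case False
    hence "b < d" using out \<open>a < b\<close> by auto
    have e: "D a b * D c d = D a c * D b d + D a d * D c b" using tt[of a c b d] \<open>b < d\<close> \<open>a < b\<close> btw by simp
    have "D a d \<ge> 0" "D c b \<ge> 0" using nn[of a d] nn[of c b] \<open>b < d\<close> \<open>a < b\<close> btw by auto
    hence "D a d * D c b \<ge> 0" by simp
    moreover have "D a c * D b d > 0" using pos by simp
    ultimately show False using e zero by simp
  qed
next
  case False
  hence ba: "b < a" using ab by simp
  show False
  proof (cases "d < b")
    case True
    have e: "D d c * D b a = D d b * D c a + D d a * D b c" using tt[of d b c a] True ba btw by simp
    have "D d a \<ge> 0" "D b c \<ge> 0" using nn[of d a] nn[of b c] True ba btw by auto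
    hence "D d a * D b c \<ge> 0" by simp
    moreover have "D d b * D c a > 0" using pos sym[of d b] sym[of c a] by simp
    ultimately show False using e zero sym[of b a] by simp
  next
    case False
    hence "a < d" using out ba by auto
    have e: "D b a * D c d = D b c * D a d + D b d * D c a" using tt[of b c a d] \<open>a < d\<close> ba btw by simp
    have "D b c \<ge> 0" "D a d \<ge> 0" using nn[of b c] nn[of a d] \<open>a < d\<close> ba btw by auto
    hence "D b c * D a d \<ge> 0" by simp
    moreover have "D b d * D c a > 0" using pos sym[of c a] by simp
    ultimately show False using e zero sym[of b a] by simp
  qed
qed


theorem lemma6p11:
  fixes n :: nat and \<B> :: "nat set set" and X :: "nat set"
  assumes "positroid n \<B>"
    and "X \<subseteq> {..<n}"
    and "connected_matroid X (restr_bases \<B> X)"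
    and "connected_matroid ({..<n} - X) (contr_bases \<B> X)"
  shows "cyclic_interval n X"
proof -
  from assms(1) obtain k A where A: "A \<in> carrier_mat k n" and r: "vec_space.rank k A = k"
    and nn: "\<forall>I. I \<subseteq> {..<n} \<and> card I = k \<longrightarrow> max_minor A I \<ge> 0"
    and Bdef: "\<B> = {I. I \<subseteq> {..<n} \<and> card I = k \<and> max_minor A I \<noteq> 0}"
    unfolding positroid_def by blast
  have mmD: "max_minor A I = Dm A k I" if "I \<subseteq> {..<n}" for I
    using max_minor_Dl[OF A that] unfolding Dm_def by simp
  have inB: "I \<in> \<B> \<longleftrightarrow> I \<subseteq> {..<n} \<and> card I = k \<and> Dm A k I \<noteq> 0" for I
    using mmD unfolding Bdef by auto
  have nnD: "Dm A k I \<ge> 0" if "I \<subseteq> {..<n}" "card I = k" for I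
    using nn mmD[OF that(1)] that by auto
  have sb: "sbases {..<n} \<B>"
    unfolding sbases_def
  proof (intro conjI ballI)
    show "finite {..<n}" by simp
    obtain I where "I \<subseteq> {..<n}" "card I = k" "Dm A k I \<noteq> 0" using bases_nonempty[OF A r] by blast
    hence "I \<in> \<B>" using inB by simp
    thus "\<B> \<noteq> {}" by auto
  next
    fix B assume "B \<in> \<B>" thus "B \<subseteq> {..<n}" using inB by simp
  next
    fix B1 B2 x assume B1: "B1 \<in> \<B>" and B2: "B2 \<in> \<B>" and x: "x \<in> B2 - B1"
    have b1: "B1 \<subseteq> {..<n}" "card B1 = k" "Dm A k B1 \<noteq> 0" using B1 inB by auto
    have b2: "B2 \<subseteq> {..<n}" "card B2 = k" "Dm A k B2 \<noteq> 0" using B2 inB by auto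
    have f1: "finite B1" "finite B2" using b1 b2 finite_subset by auto
    obtain u where u: "u \<in> B1 - B2" "Dm A k (insert x (B1 - {u})) \<noteq> 0" "Dm A k (insert u (B2 - {x})) \<noteq> 0"
      using sym_exchange[OF A b1 b2] x by blast
    have "card (insert x (B1 - {u})) = card B1" by (rule card_swap) (use f1 u x in auto)
    hence "insert x (B1 - {u}) \<in> \<B>" using inB b1 b2 u x by auto
    moreover have "card (insert u (B2 - {x})) = card B2" by (rule card_swap) (use f1 u x in auto)
    hence "insert u (B2 - {x}) \<in> \<B>" using inB b1 b2 u x by auto
    ultimately show "\<exists>u\<in>B1 - B2. insert x (B1 - {u}) \<in> \<B> \<and> insert u (B2 - {x}) \<in> \<B>" using u by blast
  qed
  show ?thesis
  proof (rule ccontr)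
    assume nc: "\<not> cyclic_interval n X"
    have Xne: "X \<noteq> {}" using nc unfolding cyclic_interval_def by auto
    obtain p q y1 y2 where pq: "p \<in> X" "q \<in> X" and yy: "y1 < n" "y2 < n" "y1 \<notin> X" "y2 \<notin> X"
      and cr: "y1 < p" "p < y2" "q < y1 \<or> y2 < q"
      using noncyc_cross[OF assms(2) Xne nc] by blast
    let ?RB = "restr_bases \<B> X"
    let ?CB = "contr_bases \<B> X"
    have mR: "matroid_bases X ?RB" by (rule rb_matroid[OF sb assms(2)])
    have mC: "matroid_bases ({..<n} - X) ?CB" by (rule cb_matroid[OF sb assms(2)])
    have ch1: "(brel ?RB)\<^sup>*\<^sup>* p q" by (rule conn_chain[OF mR assms(3) pq])
    obtain a b where ab: "brel ?RB a b" "y1 < a \<and> a < y2" "\<not> (y1 < b \<and> b < y2)"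
      using chain_cross[of "brel ?RB" p q "\<lambda>z. y1 < z \<and> z < y2"] ch1 cr by auto
    obtain J where J: "J \<in> ?RB" "a \<in> J" "b \<notin> J" "insert b (J - {a}) \<in> ?RB"
      using ab(1) unfolding brel_def by blast
    have JX: "J \<subseteq> X" "insert b (J - {a}) \<subseteq> X" using mbD(3)[OF mR] J by auto
    have abX: "a \<in> X" "b \<in> X" using JX J by auto
    have bout: "b < y1 \<or> y2 < b"
    proof -
      have "b \<noteq> y1" "b \<noteq> y2" using abX yy by auto
      thus ?thesis using ab(3) by auto
    qed
    define Q where "Q z = (min a b < z \<and> z < max a b)" for z
    obtain u0 v0 where uv: "u0 \<in> {..<n} - X" "v0 \<in> {..<n} - X" "Q u0" "\<not> Q v0"
    proof (cases "b < y1")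
      case True
      have "Q y1" "\<not> Q y2" unfolding Q_def using True ab(2) by auto
      thus ?thesis using that[of y1 y2] yy by auto
    next
      case False
      hence "y2 < b" using bout by simp
      hence "Q y2" "\<not> Q y1" unfolding Q_def using ab(2) by auto
      thus ?thesis using that[of y2 y1] yy by auto
    qed
    have ch2: "(brel ?CB)\<^sup>*\<^sup>* u0 v0" by (rule conn_chain[OF mC assms(4) uv(1,2)])
    obtain c d where cd: "brel ?CB c d" "Q c" "\<not> Q d"
      using chain_cross[of "brel ?CB" u0 v0 Q] ch2 uv by auto
    obtain K where K: "K \<in> ?CB" "c \<in> K" "d \<notin> K" "insert d (K - {c}) \<in> ?CB"
      using cd(1) unfolding brel_def by blast
    have KX: "K \<subseteq> {..<n} - X" "insert d (K - {c}) \<subseteq> {..<n} - X" using mbD(3)[OF mC] K by auto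
    have cdX: "c \<notin> X" "d \<notin> X" "c < n" "d < n" using KX K by auto
    obtain B0 where B0: "K = B0 - X" "B0 \<in> \<B>" "B0 \<inter> X \<in> ?RB" using cb_elim[OF K(1)] by blast
    obtain B0' where B0': "insert d (K - {c}) = B0' - X" "B0' \<in> \<B>" "B0' \<inter> X \<in> ?RB" using cb_elim[OF K(4)] by blast
    have T1: "J \<union> K \<in> \<B>" using join_rb_cb[OF sb J(1) B0(2,3)] B0(1) by simp
    have T2: "insert b (J - {a}) \<union> insert d (K - {c}) \<in> \<B>" using join_rb_cb[OF sb J(4) B0'(2,3)] B0'(1) by simp
    define S where "S = (J - {a}) \<union> (K - {c})"
    have T1e: "J \<union> K = insert a (insert c S)" unfolding S_def using J K by auto
    have T2e: "insert b (J - {a}) \<union> insert d (K - {c}) = insert b (insert d S)" unfolding S_def by auto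
    have nS: "a \<notin> S" "b \<notin> S" "c \<notin> S" "d \<notin> S" unfolding S_def using J K JX KX abX cdX by auto
    have fS: "finite S" unfolding S_def using JX KX finite_subset assms(2) by (meson finite_Diff finite_Un finite_lessThan Diff_subset subset_trans)
    have Sn: "S \<subseteq> {..<n}" unfolding S_def using JX KX assms(2) by auto
    have abcdn: "a < n" "b < n" "c < n" "d < n" using abX assms(2) cdX by auto
    have cT1: "card (insert a (insert c S)) = k" using T1 T1e inB by simp
    have ac: "a \<noteq> c" using abX cdX by auto
    have lenS: "card S + 2 = k" using cT1 fS nS ac by simp
    define D where "D x y = Dm A k (insert x (insert y S))" for x y
    have symD: "D x y = D y x" for x y unfolding D_def by (simp add: insert_commute)
    have distinct: "a \<noteq> b" "a \<noteq> c" "a \<noteq> d" "b \<noteq> c" "b \<noteq> d" "c \<noteq> d" using J K abX cdX by auto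
    have sub4: "insert x (insert y S) \<subseteq> {..<n}" if "x \<in> {a,b,c,d}" "y \<in> {a,b,c,d}" for x y
      using that Sn abcdn by auto
    have card4: "card (insert x (insert y S)) = k" if "x \<in> {a,b,c,d}" "y \<in> {a,b,c,d}" "x \<noteq> y" for x y
      using that fS nS lenS by auto
    have nnD4: "D x y \<ge> 0" if "x \<in> {a,b,c,d}" "y \<in> {a,b,c,d}" "x \<noteq> y" for x y
      unfolding D_def using nnD[OF sub4[OF that(1,2)] card4[OF that]] .
    have Dac: "D a c > 0"
    proof -
      have "D a c \<noteq> 0" unfolding D_def using T1 T1e inB by simp
      moreover have "D a c \<ge> 0" using nnD4[of a c] distinct by simp
      ultimately show ?thesis by simp
    qed
    have Dbd: "D b d > 0"
    proof -
      have "D b d \<noteq> 0" unfolding D_def using T2 T2e inB by simp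
      moreover have "D b d \<ge> 0" using nnD4[of b d] distinct by simp
      ultimately show ?thesis by simp
    qed
    have Dab: "D a b = 0"
    proof -
      have notB: "insert a (insert b S) \<notin> \<B>"
      proof
        assume T3: "insert a (insert b S) \<in> \<B>"
        have "insert a (insert b S) \<inter> X = insert b J" unfolding S_def using J JX KX abX by auto
        moreover have "finite J" using JX assms(2) finite_subset by (meson finite_lessThan subset_trans)
        hence "card (insert b J) = Suc (card J)" using J(3) by simp
        ultimately show False using rb_card(1)[OF sb J(1) T3] by simp
      qed
      have "insert a (insert b S) \<subseteq> {..<n}" "card (insert a (insert b S)) = k"
        using sub4[of a b] card4[of a b] distinct by auto
      thus ?thesis using notB inB unfolding D_def by blast
    qed
    have tt: "D w y * D x z = D w x * D y z + D w z * D x y"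
      if "w \<in> {a,b,c,d}" "x \<in> {a,b,c,d}" "y \<in> {a,b,c,d}" "z \<in> {a,b,c,d}" "w < x" "x < y" "y < z" for w x y z
    proof -
      have "w \<notin> S" "x \<notin> S" "y \<notin> S" "z \<notin> S" using that(1-4) nS by auto
      thus ?thesis unfolding D_def using three_term[OF A fS that(5-7) _ _ _ _ lenS] by blast
    qed
    have btw: "min a b < c" "c < max a b" using cd(2) unfolding Q_def by auto
    have out: "d < min a b \<or> max a b < d" using cd(3) distinct unfolding Q_def by auto
    show False using cross_contra[of D a b c d, OF symD nnD4 tt Dac Dbd Dab distinct(1) btw out] by blast
  qed
qed

end
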